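(* Let $n\in\mathbb{N}$ and $m\geq 3$. Then \[ p'_{e,m}(n) -p'_{o,m}(n) = \begin{cases} (-1)^k, &\text{if } n=P_{m+2,k}\text{ or }n=Q_{m+2,k}\text{ for some }k\in\mathbb{N}, \\ 0, & \text{otherwise,} \end{cases} \] where $P_{m+2,k}=\frac{k(mk-(m-2))}{2}$ and $Q_{m+2,k}=\frac{k(mk+(m-2))}{2}$.
   Context: For $m\ge3$, $p'_{e,m}(n)$ (resp. $p'_{o,m}(n)$) is the number of partitions of $n$ into an even (resp. odd) number of distinct parts, each part being congruent to $0$, $1$ or $m-1$ modulo $m$. *)

theory Defs
  imports Main
begin

definition dist_parts_mod :: "nat \<Rightarrow> nat \<Rightarrow> nat set set" where
  "dist_parts_mod m n = {S. finite S \<and> 0 \<notin> S \<and> \<Sum>S = n \<and>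
      (\<forall>x\<in>S. x mod m = 0 \<or> x mod m = 1 \<or> x mod m = m - 1)}"

definition p_e :: "nat \<Rightarrow> nat \<Rightarrow> nat" where
  "p_e m n = card {S \<in> dist_parts_mod m n. even (card S)}"

definition p_o :: "nat \<Rightarrow> nat \<Rightarrow> nat" where
  "p_o m n = card {S \<in> dist_parts_mod m n. odd (card S)}"

definition P_gen :: "nat \<Rightarrow> nat \<Rightarrow> int" where
  "P_gen m k = (int k * (int m * int k - (int m - 2))) div 2"

definition Q_gen :: "nat \<Rightarrow> nat \<Rightarrow> int" where
  "Q_gen m k = (int k * (int m * int k + (int m - 2))) div 2"

end

theory Submission
  imports Defs
begin

definition memT :: "int set \<Rightarrow> int \<Rightarrow> bool" where
  "memT D x \<longleftrightarrow> ((x \<in> D) \<noteq> (x < 0))"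

definition tog :: "int \<Rightarrow> int set \<Rightarrow> int set" where
  "tog x D = (if x \<in> D then D - {x} else insert x D)"

definition sdown :: "int set \<Rightarrow> int set" where
  "sdown D = tog (-1) ((\<lambda>t. t - 1) ` D)"

definition shup :: "int set \<Rightarrow> int set" where
  "shup D = tog 0 ((\<lambda>t. t + 1) ` D)"

definition chg :: "int set \<Rightarrow> int" where
  "chg D = (\<Sum>t\<in>D. if t \<ge> 0 then 1 else -1)"

definition Wt :: "nat \<Rightarrow> int set \<Rightarrow> int" where
  "Wt m D = (\<Sum>t\<in>D. \<bar>int m * t + 1\<bar>)"

definition topT :: "int set \<Rightarrow> int" where
  "topT D = (GREATEST x. memT D x)"

definition lamT :: "int set \<Rightarrow> int" where
  "lamT D = topT D - chg D + 1"

lemma memT_ext: "(\<And>y. memT D y = memT E y) \<Longrightarrow> D = E"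
  unfolding memT_def by blast

lemma top_exists:
  assumes "finite D"
  shows "\<exists>x. memT D x \<and> (\<forall>y. memT D y \<longrightarrow> y \<le> x)"
proof -
  define lo where "lo = Min (insert 0 D) - 1"
  define hi where "hi = Max (insert 0 D)"
  have "Min (insert 0 D) \<le> 0" using assms by (intro Min_le) auto
  then have lo1: "lo < 0" by (simp add: lo_def)
  have lo2: "lo \<notin> D"
  proof
    assume "lo \<in> D"
    then have "Min (insert 0 D) \<le> lo" using assms by (intro Min_le) auto
    then show False by (simp add: lo_def)
  qed
  have mlo: "memT D lo" using lo1 lo2 by (simp add: memT_def)
  define M where "M = {x. memT D x \<and> lo \<le> x}"
  have "M \<subseteq> {lo..hi}"
  proof
    fix x assume "x \<in> M"
    then have "memT D x" "lo \<le> x" by (auto simp: M_def)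
    moreover have "x \<le> hi"
    proof (cases "x < 0")
      case True
      then show ?thesis using assms by (simp add: hi_def) (meson Max_ge finite_insert insertI1 less_le_not_le order.trans)
    next
      case False
      then have "x \<in> D" using \<open>memT D x\<close> by (simp add: memT_def)
      then show ?thesis using assms by (simp add: hi_def)
    qed
    ultimately show "x \<in> {lo..hi}" by simp
  qed
  then have fM: "finite M" using finite_subset by blast
  have "lo \<in> M" using mlo by (simp add: M_def)
  then have ne: "M \<noteq> {}" by blast
  define x0 where "x0 = Max M"
  have "x0 \<in> M" using fM ne by (simp add: x0_def)
  then have "memT D x0" by (simp add: M_def)
  moreover have "\<forall>y. memT D y \<longrightarrow> y \<le> x0"
  proof (intro allI impI)
    fix y assume "memT D y"
    show "y \<le> x0"
    proof (cases "lo \<le> y")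
      case True
      then have "y \<in> M" using \<open>memT D y\<close> by (simp add: M_def)
      then show ?thesis using fM by (simp add: x0_def)
    next
      case False
      then show ?thesis using \<open>lo \<in> M\<close> fM x0_def by (meson Max_ge le_cases order.trans)
    qed
  qed
  ultimately show ?thesis by blast
qed

lemma topT_mem: "finite D \<Longrightarrow> memT D (topT D)"
  using top_exists[of D] unfolding topT_def by (metis Greatest_equality)

lemma topT_ge: "finite D \<Longrightarrow> memT D y \<Longrightarrow> y \<le> topT D"
  using top_exists[of D] unfolding topT_def by (metis Greatest_equality)

lemma topT_eq: "memT D x \<Longrightarrow> (\<And>y. memT D y \<Longrightarrow> y \<le> x) \<Longrightarrow> topT D = x"
  unfolding topT_def by (rule Greatest_equality)

lemma memT_tog: "memT (tog x D) y = (if y = x then \<not> memT D x else memT D y)"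
  by (auto simp: memT_def tog_def)

lemma finite_tog[simp]: "finite (tog x D) = finite D"
  by (simp add: tog_def)

lemma tog_tog[simp]: "tog x (tog x D) = D"
  by (auto simp: tog_def)

lemma finite_sdown[simp]: "finite D \<Longrightarrow> finite (sdown D)"
  by (simp add: sdown_def)

lemma finite_shup[simp]: "finite D \<Longrightarrow> finite (shup D)"
  by (simp add: shup_def)

lemma memT_sdown: "memT (sdown D) y = memT D (y + 1)"
proof -
  have "(y \<in> (\<lambda>t. t - 1) ` D) = (y + 1 \<in> D)" by force
  then show ?thesis unfolding sdown_def memT_tog by (auto simp: memT_def)
qed

lemma memT_shup: "memT (shup D) y = memT D (y - 1)"
proof -
  have "(y \<in> (\<lambda>t. t + 1) ` D) = (y - 1 \<in> D)" by force
  then show ?thesis unfolding shup_def memT_tog by (auto simp: memT_def)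
qed

lemma shup_sdown[simp]: "shup (sdown D) = D"
  by (rule memT_ext) (simp add: memT_shup memT_sdown)

lemma sdown_shup[simp]: "sdown (shup D) = D"
  by (rule memT_ext) (simp add: memT_shup memT_sdown)

lemma chg_tog: "finite D \<Longrightarrow> chg (tog x D) = chg D + (if memT D x then -1 else 1)"
  unfolding chg_def tog_def memT_def
  by (auto simp: sum_diff1)

lemma Wt_tog:
  assumes "finite D" "m \<ge> 1"
  shows "Wt m (tog x D) = Wt m D + (if memT D x then -(int m * x + 1) else int m * x + 1)"
proof -
  have a: "x \<ge> 0 \<Longrightarrow> \<bar>int m * x + 1\<bar> = int m * x + 1" by simp
  have b: "x < 0 \<Longrightarrow> \<bar>int m * x + 1\<bar> = -(int m * x + 1)"
  proof -
    assume "x < 0"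
    then have "int m * x \<le> int m * (-1)" using assms(2) by (intro mult_left_mono) auto
    then show ?thesis using assms(2) by simp
  qed
  show ?thesis unfolding Wt_def tog_def memT_def
    using assms(1) a b by (auto simp: sum_diff1)
qed


lemma chg_img_down:
  assumes "finite D"
  shows "chg ((\<lambda>t. t - 1) ` D) = chg D - (if 0 \<in> D then 2 else 0)"
proof -
  have inj: "inj_on (\<lambda>t::int. t - 1) D" by (auto simp: inj_on_def)
  have "chg ((\<lambda>t. t - 1) ` D) = (\<Sum>t\<in>D. if t - 1 \<ge> 0 then 1 else -1)"
    unfolding chg_def by (simp add: sum.reindex[OF inj])
  also have "\<dots> = (\<Sum>t\<in>D. (if t \<ge> 0 then 1 else -1) - (if t = 0 then 2 else 0))"
    by (rule sum.cong) auto
  also have "\<dots> = chg D - (if 0 \<in> D then 2 else 0)"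
    unfolding chg_def using assms by (simp add: sum_subtractf)
  finally show ?thesis .
qed

lemma abs_pt:
  assumes "m \<ge> 1"
  shows "\<bar>int m * (t - 1) + 1\<bar> = \<bar>int m * t + 1\<bar> - int m * (if t \<ge> 0 then 1 else -1)
           + (if t = 0 then 2 * int m - 2 else 0)"
proof -
  consider "t \<ge> 1" | "t = 0" | "t \<le> -1" by linarith
  then show ?thesis
  proof cases
    case 1
    then have "int m * t \<ge> int m * 1" by (intro mult_left_mono) auto
    then show ?thesis using 1 by (simp add: algebra_simps)
  next
    case 2
    then show ?thesis using assms by simp
  next
    case 3
    then have "int m * t \<le> int m * (-1)" by (intro mult_left_mono) auto
    then show ?thesis using 3 assms by (simp add: algebra_simps)
  qed
qed

lemma Wt_img_down:
  assumes "finite D" "m \<ge> 1"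
  shows "Wt m ((\<lambda>t. t - 1) ` D) = Wt m D - int m * chg D + (if 0 \<in> D then 2 * int m - 2 else 0)"
proof -
  have inj: "inj_on (\<lambda>t::int. t - 1) D" by (auto simp: inj_on_def)
  have "Wt m ((\<lambda>t. t - 1) ` D) = (\<Sum>t\<in>D. \<bar>int m * (t - 1) + 1\<bar>)"
    unfolding Wt_def by (simp add: sum.reindex[OF inj])
  also have "\<dots> = (\<Sum>t\<in>D. \<bar>int m * t + 1\<bar> - int m * (if t \<ge> 0 then 1 else -1)
           + (if t = 0 then 2 * int m - 2 else 0))"
    by (rule sum.cong) (auto simp: abs_pt[OF assms(2)])
  also have "\<dots> = Wt m D - int m * chg D + (if 0 \<in> D then 2 * int m - 2 else 0)"
    unfolding Wt_def chg_def using assms(1)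
    by (simp add: sum.distrib sum_subtractf sum_distrib_left)
  finally show ?thesis .
qed

lemma memT_img_down_m1: "memT ((\<lambda>t. t - 1) ` D) (-1) = (0 \<notin> D)"
proof -
  have "(-1 \<in> (\<lambda>t. t - 1) ` D) = (0 \<in> D)" by force
  then show ?thesis by (simp add: memT_def)
qed

lemma chg_sdown: "finite D \<Longrightarrow> chg (sdown D) = chg D - 1"
  unfolding sdown_def
  by (simp add: chg_tog chg_img_down memT_img_down_m1)

lemma Wt_sdown: "finite D \<Longrightarrow> m \<ge> 1 \<Longrightarrow> Wt m (sdown D) = Wt m D - int m * chg D + int m - 1"
  unfolding sdown_def
  by (simp add: Wt_tog Wt_img_down memT_img_down_m1)

lemma chg_shup: "finite D \<Longrightarrow> chg (shup D) = chg D + 1"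
  using chg_sdown[of "shup D"] by simp

lemma Wt_shup: "finite D \<Longrightarrow> m \<ge> 1 \<Longrightarrow> Wt m (shup D) = Wt m D + int m * chg D + 1"
  using Wt_sdown[of "shup D" m] chg_shup[of D] by (simp add: algebra_simps)

lemma chg_insert: "finite D \<Longrightarrow> x \<notin> D \<Longrightarrow> chg (insert x D) = chg D + (if x \<ge> 0 then 1 else -1)"
  unfolding chg_def by simp

lemma parity_chg: "finite D \<Longrightarrow> even (card D) = even (chg D)"
proof (induction D rule: finite_induct)
  case empty
  then show ?case by (simp add: chg_def)
next
  case (insert x F)
  then show ?case by (simp add: chg_insert)
qed

lemma sign_chg:
  assumes "finite D" "finite E" "chg D = chg E"
  shows "(-1::int) ^ card D = (-1) ^ card E"
  using parity_chg[OF assms(1)] parity_chg[OF assms(2)] assms(3)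
  by (simp add: minus_one_power_iff)


definition G :: "int \<Rightarrow> int set" where
  "G j = (if 0 \<le> j then {0..j-1} else {j..-1})"

lemma finite_G[simp]: "finite (G j)"
  by (simp add: G_def)

lemma memT_G: "memT (G j) y \<longleftrightarrow> y \<le> j - 1"
  by (auto simp: G_def memT_def)

lemma topT_G: "topT (G j) = j - 1"
  by (rule topT_eq) (auto simp: memT_G)

lemma chg_G: "chg (G j) = j"
proof (cases "0 \<le> j")
  case True
  then have "chg (G j) = (\<Sum>t\<in>{0..j-1}. 1)" unfolding chg_def G_def
    by (intro sum.cong) auto
  then show ?thesis using True by simp
next
  case False
  then have "chg (G j) = (\<Sum>t\<in>{j..-1}. -1)" unfolding chg_def G_def
    by (intro sum.cong) auto
  then show ?thesis using False by simp
qed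

lemma lamT_G: "lamT (G j) = 0"
  by (simp add: lamT_def topT_G chg_G)

lemma card_G: "card (G j) = nat \<bar>j\<bar>"
  by (auto simp: G_def)

lemma Wt_pos_nat: "2 * Wt m {0..int k - 1} = int m * int k * int k - (int m - 2) * int k"
proof (induction k)
  case 0
  then show ?case by (simp add: Wt_def)
next
  case (Suc k)
  have e: "{0..int (Suc k) - 1} = insert (int k) {0..int k - 1}" by auto
  have "Wt m {0..int (Suc k) - 1} = \<bar>int m * int k + 1\<bar> + Wt m {0..int k - 1}"
    unfolding e Wt_def by simp
  also have "\<bar>int m * int k + 1\<bar> = int m * int k + 1" by simp
  finally show ?case using Suc.IH by (simp add: algebra_simps)
qed

lemma Wt_neg_nat:
  assumes "m \<ge> 1"
  shows "2 * Wt m {- int k..-1} = int m * int k * int k + (int m - 2) * int k"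
proof (induction k)
  case 0
  then show ?case by (simp add: Wt_def)
next
  case (Suc k)
  have e: "{- int (Suc k)..-1} = insert (- int k - 1) {- int k..-1}" by auto
  have "Wt m {- int (Suc k)..-1} = \<bar>int m * (- int k - 1) + 1\<bar> + Wt m {- int k..-1}"
    unfolding e Wt_def by simp
  also have "\<bar>int m * (- int k - 1) + 1\<bar> = int m * int k + int m - 1"
  proof -
    have "int m * (- int k - 1) + 1 = -(int m * int k + int m - 1)" by (simp add: algebra_simps)
    moreover have "int m * int k \<ge> 0" by simp
    then have "int m * int k + int m - 1 \<ge> 0" using assms by linarith
    ultimately show ?thesis by simp
  qed
  finally show ?case using Suc.IH by (simp add: algebra_simps)
qed

lemma Wt_G2:
  assumes "m \<ge> 1"
  shows "2 * Wt m (G j) = int m * j * j - (int m - 2) * j"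
proof (cases "0 \<le> j")
  case True
  then obtain k where k: "j = int k" by (metis nonneg_eq_int)
  show ?thesis using Wt_pos_nat[of m k] by (simp add: G_def k)
next
  case False
  then obtain k where k: "j = - int k" by (metis linear neg_equal_0_iff_equal nonneg_int_cases minus_minus neg_0_le_iff_le)
  have "G j = {- int k..-1}" using False by (simp add: G_def k)
  then show ?thesis using Wt_neg_nat[OF assms, of k] by (simp add: k algebra_simps)
qed

lemma P_gen_eq: "m \<ge> 1 \<Longrightarrow> P_gen m k = Wt m (G (int k))"
proof -
  assume "m \<ge> 1"
  have "int k * (int m * int k - (int m - 2)) = 2 * Wt m (G (int k))"
    using Wt_G2[OF \<open>m \<ge> 1\<close>, of "int k"] by (simp add: algebra_simps)
  then show ?thesis unfolding P_gen_def by simp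
qed

lemma Q_gen_eq: "m \<ge> 1 \<Longrightarrow> Q_gen m k = Wt m (G (- int k))"
proof -
  assume "m \<ge> 1"
  have "int k * (int m * int k + (int m - 2)) = 2 * Wt m (G (- int k))"
    using Wt_G2[OF \<open>m \<ge> 1\<close>, of "- int k"] by (simp add: algebra_simps)
  then show ?thesis unfolding Q_gen_def by simp
qed

lemma Wt_G_inj:
  assumes "m \<ge> 3" "Wt m (G i) = Wt m (G j)"
  shows "i = j"
proof -
  have "int m * i * i - (int m - 2) * i = int m * j * j - (int m - 2) * j"
    using Wt_G2[of m i] Wt_G2[of m j] assms by simp
  then have "(i - j) * (int m * (i + j) - (int m - 2)) = 0"
    by (simp add: algebra_simps)
  moreover have "int m * (i + j) \<noteq> int m - 2"
  proof
    assume h: "int m * (i + j) = int m - 2"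
    show False
    proof (cases "i + j \<le> 0")
      case True
      then have "int m * (i + j) \<le> 0" by (simp add: mult_nonneg_nonpos)
      then show False using h assms by simp
    next
      case False
      then have "int m * (i + j) \<ge> int m * 1" by (intro mult_left_mono) auto
      then show False using h by simp
    qed
  qed
  ultimately show ?thesis by simp
qed

lemma sum_split_sign:
  assumes "finite D"
  shows "chg D = int (card {t\<in>D. t \<ge> 0}) - int (card {t\<in>D. t < 0})"
proof -
  have "chg D = (\<Sum>t\<in>D \<inter> {t. t \<ge> 0}. 1) + (\<Sum>t\<in>D \<inter> - {t. t \<ge> 0}. -1)"
    unfolding chg_def using assms by (rule sum.If_cases)
  moreover have "D \<inter> {t. t \<ge> 0} = {t\<in>D. t \<ge> 0}" by auto
  moreover have "D \<inter> - {t. t \<ge> 0} = {t\<in>D. t < 0}" by auto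
  ultimately show ?thesis by simp
qed

lemma ground_char:
  assumes "finite D" "lamT D \<le> 0"
  shows "D = G (chg D)"
proof -
  define k where "k = chg D"
  have top: "y \<le> k - 1" if "memT D y" for y
  proof -
    have "y \<le> topT D" by (rule topT_ge[OF assms(1) that])
    then show ?thesis using assms(2) unfolding lamT_def k_def by linarith
  qed
  define Pos where "Pos = {t\<in>D. t \<ge> 0}"
  define Neg where "Neg = {t\<in>D. t < 0}"
  have fP: "finite Pos" "finite Neg" using assms(1) by (auto simp: Pos_def Neg_def)
  have kpq: "k = int (card Pos) - int (card Neg)"
    using sum_split_sign[OF assms(1)] by (simp add: k_def Pos_def Neg_def)
  have PosS: "Pos \<subseteq> {0..k-1}"
  proof
    fix t assume "t \<in> Pos"
    then have "memT D t" "t \<ge> 0" by (auto simp: Pos_def memT_def)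
    then show "t \<in> {0..k-1}" using top by auto
  qed
  have NegS: "{k..-1} \<subseteq> Neg"
  proof
    fix t assume t: "t \<in> {k..-1}"
    have "k \<le> t" using t by simp
    then have "\<not> memT D t" using top[of t] by linarith
    then show "t \<in> Neg" using t by (auto simp: Neg_def memT_def)
  qed
  have cP: "card Pos \<le> nat k" using card_mono[OF _ PosS] by simp
  have cN: "nat (-k) \<le> card Neg" using card_mono[OF fP(2) NegS] by simp
  show ?thesis
  proof (rule memT_ext)
    fix y
    show "memT D y = memT (G (chg D)) y"
    proof
      assume "memT D y" then show "memT (G (chg D)) y" using top by (simp add: memT_G k_def)
    next
      assume "memT (G (chg D)) y"
      then have y: "y \<le> k - 1" by (simp add: memT_G k_def)
      show "memT D y"
      proof (cases "k \<ge> 0")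
        case True
        then have "card Neg = 0" "card Pos = nat k" using kpq cP by auto
        then have "Neg = {}" using fP by auto
        have "Pos = {0..k-1}"
          using card_subset_eq[of "{0..k-1}" Pos] PosS \<open>card Pos = nat k\<close> by simp
        show ?thesis
        proof (cases "y < 0")
          case True
          then have "y \<notin> D" using \<open>Neg = {}\<close> unfolding Neg_def by blast
          then show ?thesis using True by (simp add: memT_def)
        next
          case False
          then have "y \<in> Pos" using \<open>Pos = {0..k-1}\<close> y by simp
          then show ?thesis using False by (simp add: memT_def Pos_def)
        qed
      next
        case False
        then have "Pos = {}" using PosS by auto
        then have "card Neg = nat (-k)" using kpq False by simp
        have "Neg = {k..-1}"
          using card_subset_eq[of Neg "{k..-1}"] NegS \<open>card Neg = nat (-k)\<close> fP by simp
        have "y \<notin> D"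
        proof
          assume "y \<in> D"
          moreover have "y < 0" using y False by simp
          ultimately have "y \<in> Neg" by (simp add: Neg_def)
          then have "k \<le> y" using \<open>Neg = {k..-1}\<close> by simp
          then show False using y by simp
        qed
        then show ?thesis using y False by (simp add: memT_def)
      qed
    qed
  qed
qed


definition iota :: "nat set \<times> int set \<Rightarrow> nat set \<times> int set" where
  "iota = (\<lambda>(A, D). if A \<noteq> {} \<and> lamT D \<le> int (Max A)
      then (A - {Max A}, tog (int (Max A) + chg D - 1) (sdown D))
      else if 0 < lamT D then (insert (nat (lamT D)) A, shup (tog (topT D) D))
      else (A, D))"

lemma case1_facts:
  assumes fD: "finite D" and la: "lamT D \<le> int a"
  defines "D1 \<equiv> tog (int a + chg D - 1) (sdown D)"
  shows "\<not> memT (sdown D) (int a + chg D - 1)"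
    and "chg D1 = chg D"
    and "topT D1 = int a + chg D - 1"
    and "lamT D1 = int a"
    and "m \<ge> 1 \<Longrightarrow> Wt m D1 = Wt m D + int m * int a"
proof -
  have tl: "topT D \<le> int a + chg D - 1" using la by (simp add: lamT_def)
  show nm: "\<not> memT (sdown D) (int a + chg D - 1)"
  proof
    assume "memT (sdown D) (int a + chg D - 1)"
    then have "memT D (int a + chg D)" by (simp add: memT_sdown)
    then have "int a + chg D \<le> topT D" by (rule topT_ge[OF fD])
    then show False using tl by simp
  qed
  show c: "chg D1 = chg D" unfolding D1_def using fD nm by (simp add: chg_tog chg_sdown)
  show t: "topT D1 = int a + chg D - 1"
  proof (rule topT_eq)
    show "memT D1 (int a + chg D - 1)" unfolding D1_def using nm by (simp add: memT_tog)
  next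
    fix y assume "memT D1 y"
    show "y \<le> int a + chg D - 1"
    proof (cases "y = int a + chg D - 1")
      case False
      then have "memT D (y + 1)" using \<open>memT D1 y\<close> unfolding D1_def by (simp add: memT_tog memT_sdown)
      then have "y + 1 \<le> topT D" by (rule topT_ge[OF fD])
      then show ?thesis using tl by simp
    qed simp
  qed
  show "lamT D1 = int a" unfolding lamT_def using c t by simp
  assume m: "m \<ge> 1"
  show "Wt m D1 = Wt m D + int m * int a" unfolding D1_def using fD nm m
    by (simp add: Wt_tog Wt_sdown algebra_simps)
qed

lemma case2_facts:
  assumes fD: "finite D"
  defines "D2 \<equiv> shup (tog (topT D) D)"
  shows "chg D2 = chg D"
    and "lamT D2 \<le> lamT D"
    and "m \<ge> 1 \<Longrightarrow> Wt m D2 = Wt m D - int m * lamT D"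
proof -
  have mt: "memT D (topT D)" by (rule topT_mem[OF fD])
  show c: "chg D2 = chg D" unfolding D2_def using fD mt by (simp add: chg_tog chg_shup)
  have "topT D2 \<le> topT D"
  proof -
    have "memT D2 (topT D2)" by (rule topT_mem) (simp add: D2_def fD)
    then have h: "memT (tog (topT D) D) (topT D2 - 1)" by (simp add: D2_def memT_shup)
    then have "topT D2 - 1 \<noteq> topT D" using mt by (auto simp: memT_tog)
    then have "memT D (topT D2 - 1)" using h by (simp add: memT_tog)
    then have "topT D2 - 1 \<le> topT D" by (rule topT_ge[OF fD])
    then show ?thesis using \<open>topT D2 - 1 \<noteq> topT D\<close> by simp
  qed
  then show "lamT D2 \<le> lamT D" using c by (simp add: lamT_def)
  assume m: "m \<ge> 1"
  show "Wt m D2 = Wt m D - int m * lamT D" unfolding D2_def lamT_def using fD mt m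
    by (simp add: Wt_tog Wt_shup chg_tog algebra_simps)
qed

definition Xset :: "nat \<Rightarrow> nat \<Rightarrow> (nat set \<times> int set) set" where
  "Xset m n = {(A, D). finite A \<and> 0 \<notin> A \<and> finite D \<and> int m * int (\<Sum>A) + Wt m D = int n}"

lemma iota_iota:
  assumes "finite A" "0 \<notin> A" "finite D"
  shows "iota (iota (A, D)) = (A, D)"
proof (cases "A \<noteq> {} \<and> lamT D \<le> int (Max A)")
  case True
  define a where "a = Max A"
  define D1 where "D1 = tog (int a + chg D - 1) (sdown D)"
  have la: "lamT D \<le> int a" using True by (simp add: a_def)
  have aA: "a \<in> A" using True assms by (simp add: a_def)
  have a0: "a > 0" using aA assms by (cases a) auto
  have l1: "lamT D1 = int a" using case1_facts(4)[OF assms(3) la] by (simp add: D1_def)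
  have t1: "topT D1 = int a + chg D - 1" using case1_facts(3)[OF assms(3) la] by (simp add: D1_def)
  have fD1: "finite D1" using assms by (simp add: D1_def)
  have i1: "iota (A, D) = (A - {a}, D1)" unfolding iota_def case_prod_conv if_P[OF True] by (simp add: a_def D1_def)
  have lt: "\<forall>b \<in> A - {a}. b < a" using assms(1) a_def by (metis Diff_iff Max_ge insertCI le_neq_implies_less)
  have nc: "\<not> (A - {a} \<noteq> {} \<and> lamT D1 \<le> int (Max (A - {a})))"
  proof
    assume h: "A - {a} \<noteq> {} \<and> lamT D1 \<le> int (Max (A - {a}))"
    then have "Max (A - {a}) \<in> A - {a}" using assms(1) by (intro Max_in) auto
    then have "Max (A - {a}) < a" using lt by blast
    then show False using h l1 by simp
  qed
  have "iota (A - {a}, D1) = (insert (nat (lamT D1)) (A - {a}), shup (tog (topT D1) D1))"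
    unfolding iota_def case_prod_conv if_not_P[OF nc] using l1 a0 by simp
  also have "\<dots> = (A, D)"
  proof -
    have "nat (lamT D1) = a" using l1 by simp
    then have e1: "insert (nat (lamT D1)) (A - {a}) = A" using aA by (simp add: insert_absorb)
    have e2: "tog (topT D1) D1 = sdown D"
    proof -
      have "tog (topT D1) D1 = tog (int a + chg D - 1) D1" by (simp only: t1)
      also have "\<dots> = sdown D" unfolding D1_def by (rule tog_tog)
      finally show ?thesis .
    qed
    show ?thesis by (simp only: e1 e2 shup_sdown)
  qed
  finally have "iota (A - {a}, D1) = (A, D)" .
  then show ?thesis by (simp only: i1)
next
  case False
  note F = False
  show ?thesis
  proof (cases "0 < lamT D")
    case True
    define l where "l = nat (lamT D)"
    define D2 where "D2 = shup (tog (topT D) D)"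
    have i2: "iota (A, D) = (insert l A, D2)" unfolding iota_def case_prod_conv if_not_P[OF F] if_P[OF True] by (simp add: l_def D2_def)
    have lA: "\<forall>b\<in>A. b < l"
    proof
      fix b assume bA: "b \<in> A"
      then have "A \<noteq> {}" by blast
      then have "int (Max A) < lamT D" using F by simp
      moreover have "b \<le> Max A" using bA assms(1) by simp
      ultimately have "int b < lamT D" by linarith
      then show "b < l" unfolding l_def by linarith
    qed
    then have lnA: "l \<notin> A" by blast
    have Ml: "Max (insert l A) = l" using lA assms(1) by (simp add: Max_insert2 less_imp_le)
    have c2: "chg D2 = chg D" and le2: "lamT D2 \<le> lamT D" using case2_facts[OF assms(3)] by (simp_all add: D2_def)
    have c1: "insert l A \<noteq> {} \<and> lamT D2 \<le> int (Max (insert l A))" using Ml le2 True by (simp add: l_def)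
    have "iota (insert l A, D2) = (insert l A - {l}, tog (int l + chg D2 - 1) (sdown D2))"
      unfolding iota_def case_prod_conv if_P[OF c1] using Ml by simp
    also have "\<dots> = (A, D)"
    proof -
      have e1: "insert l A - {l} = A" using lnA by simp
      have "int l + chg D2 - 1 = topT D" using c2 True by (simp add: l_def lamT_def)
      then have e2: "tog (int l + chg D2 - 1) (sdown D2) = D" by (simp add: D2_def)
      show ?thesis by (simp only: e1 e2)
    qed
    finally have "iota (insert l A, D2) = (A, D)" .
    then show ?thesis by (simp only: i2)
  next
    case False
    then show ?thesis unfolding iota_def case_prod_conv if_not_P[OF F] if_not_P[OF False] by simp
  qed
qed


definition sg :: "nat set \<times> int set \<Rightarrow> int" where
  "sg x = (-1) ^ (card (fst x) + card (snd x))"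

lemma iota_props:
  assumes X: "(A, D) \<in> Xset m n" and m: "m \<ge> 1"
  shows "iota (A, D) \<in> Xset m n"
    and "iota (A, D) \<noteq> (A, D) \<Longrightarrow> sg (iota (A, D)) = - sg (A, D)"
    and "iota (A, D) = (A, D) \<Longrightarrow> A = {} \<and> D = G (chg D)"
proof -
  have fA: "finite A" and A0: "0 \<notin> A" and fD: "finite D"
    and w: "int m * int (\<Sum>A) + Wt m D = int n" using X by (auto simp: Xset_def)
  have "iota (A, D) \<in> Xset m n \<and> (iota (A, D) \<noteq> (A, D) \<longrightarrow> sg (iota (A, D)) = - sg (A, D))
        \<and> (iota (A, D) = (A, D) \<longrightarrow> A = {} \<and> D = G (chg D))"
  proof (cases "A \<noteq> {} \<and> lamT D \<le> int (Max A)")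
    case True
    define a where "a = Max A"
    define D1 where "D1 = tog (int a + chg D - 1) (sdown D)"
    have la: "lamT D \<le> int a" using True by (simp add: a_def)
    have aA: "a \<in> A" using True fA by (simp add: a_def)
    have i1: "iota (A, D) = (A - {a}, D1)"
      unfolding iota_def case_prod_conv if_P[OF True] by (simp add: a_def D1_def)
    have c1: "chg D1 = chg D" using case1_facts(2)[OF fD la] by (simp add: D1_def)
    have w1: "Wt m D1 = Wt m D + int m * int a" using case1_facts(5)[OF fD la m] by (simp add: D1_def)
    have fD1: "finite D1" using fD by (simp add: D1_def)
    have sA: "\<Sum>A = a + \<Sum>(A - {a})" using fA aA by (simp add: sum.remove)
    have inX: "(A - {a}, D1) \<in> Xset m n"
      using fA A0 fD1 w w1 sA unfolding Xset_def by (simp add: algebra_simps)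
    have cA: "card A = Suc (card (A - {a}))" by (rule card_Suc_Diff1[OF fA aA, symmetric])
    have sgn: "sg (A - {a}, D1) = - sg (A, D)"
      using sign_chg[OF fD1 fD c1] cA by (simp add: sg_def power_add)
    have ne: "(A - {a}, D1) \<noteq> (A, D)" using aA by auto
    show ?thesis using i1 inX sgn ne by auto
  next
    case False
    note F = False
    show ?thesis
    proof (cases "0 < lamT D")
      case True
      define l where "l = nat (lamT D)"
      define D2 where "D2 = shup (tog (topT D) D)"
      have i2: "iota (A, D) = (insert l A, D2)"
        unfolding iota_def case_prod_conv if_not_P[OF F] if_P[OF True] by (simp add: l_def D2_def)
      have lA: "\<forall>b\<in>A. b < l"
      proof
        fix b assume bA: "b \<in> A"
        then have "A \<noteq> {}" by blast
        then have "int (Max A) < lamT D" using F by simp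
        moreover have "b \<le> Max A" using bA fA by simp
        ultimately have "int b < lamT D" by linarith
        then show "b < l" unfolding l_def by linarith
      qed
      then have lnA: "l \<notin> A" by blast
      have c2: "chg D2 = chg D" using case2_facts(1)[OF fD] by (simp add: D2_def)
      have w2: "Wt m D2 = Wt m D - int m * lamT D" using case2_facts(3)[OF fD m] by (simp add: D2_def)
      have fD2: "finite D2" using fD by (simp add: D2_def)
      have il: "int l = lamT D" using True by (simp add: l_def)
      have l0: "l \<noteq> 0" using True by (simp add: l_def)
      have sA: "\<Sum>(insert l A) = l + \<Sum>A" using fA lnA by simp
      have e: "int (\<Sum>(insert l A)) = int l + int (\<Sum>A)" using sA by simp
      have "int m * int (\<Sum>(insert l A)) + Wt m D2 = int n"
        unfolding e using w w2 il by (simp add: algebra_simps)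
      then have inX: "(insert l A, D2) \<in> Xset m n"
        using fA A0 fD2 l0 unfolding Xset_def by simp
      have cA: "card (insert l A) = Suc (card A)" using fA lnA by simp
      have sgn: "sg (insert l A, D2) = - sg (A, D)"
        using sign_chg[OF fD2 fD c2] cA by (simp add: sg_def power_add)
      have ne: "(insert l A, D2) \<noteq> (A, D)" using lnA by auto
      show ?thesis using i2 inX sgn ne by auto
    next
      case False
      have i3: "iota (A, D) = (A, D)"
        unfolding iota_def case_prod_conv if_not_P[OF F] if_not_P[OF False] by simp
      have gD: "D = G (chg D)" using ground_char[OF fD] False by simp
      have "A = {}"
      proof (rule ccontr)
        assume "A \<noteq> {}"
        then have "Max A \<in> A" using fA by simp
        then have "Max A \<noteq> 0" using A0 by metis
        then have "lamT D \<le> int (Max A)" using False by simp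
        then show False using F \<open>A \<noteq> {}\<close> by simp
      qed
      then show ?thesis using i3 gD X by simp
    qed
  qed
  then show "iota (A, D) \<in> Xset m n"
    and "iota (A, D) \<noteq> (A, D) \<Longrightarrow> sg (iota (A, D)) = - sg (A, D)"
    and "iota (A, D) = (A, D) \<Longrightarrow> A = {} \<and> D = G (chg D)" by auto
qed

lemma G_fixed: "iota ({}, G j) = ({}, G j)"
  unfolding iota_def by (simp add: lamT_G)

lemma sum_invol_cancel:
  fixes f :: "'a \<Rightarrow> int"
  assumes fX: "finite X" and cl: "\<And>x. x \<in> X \<Longrightarrow> \<iota> x \<in> X"
    and inv: "\<And>x. x \<in> X \<Longrightarrow> \<iota> (\<iota> x) = x"
    and neg: "\<And>x. x \<in> X \<Longrightarrow> \<iota> x \<noteq> x \<Longrightarrow> f (\<iota> x) = - f x"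
  shows "sum f X = sum f {x\<in>X. \<iota> x = x}"
proof -
  define Y where "Y = {x\<in>X. \<iota> x \<noteq> x}"
  have bij: "bij_betw \<iota> Y Y"
    by (rule bij_betw_byWitness[where f' = \<iota>]) (use inv cl in \<open>auto simp: Y_def\<close>)
  have "sum f Y = sum (\<lambda>x. f (\<iota> x)) Y" using sum.reindex_bij_betw[OF bij, of f] by simp
  also have "\<dots> = sum (\<lambda>x. - f x) Y" by (rule sum.cong) (auto simp: Y_def neg)
  also have "\<dots> = - sum f Y" by (simp add: sum_negf)
  finally have Y0: "sum f Y = 0" by simp
  have "sum f X = sum f (X \<inter> {x. \<iota> x = x}) + sum f (X - {x. \<iota> x = x})"
    using fX by (rule sum.Int_Diff)
  moreover have "X \<inter> {x. \<iota> x = x} = {x\<in>X. \<iota> x = x}" by auto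
  moreover have "X - {x. \<iota> x = x} = Y" by (auto simp: Y_def)
  ultimately show ?thesis using Y0 by simp
qed


definition vv :: "nat \<Rightarrow> int \<Rightarrow> nat" where
  "vv m t = nat \<bar>int m * t + 1\<bar>"

lemma vv_val:
  assumes "m \<ge> 3"
  shows "vv m t = (if t \<ge> 0 then m * nat t + 1 else m * nat (-t-1) + (m - 1))"
proof (cases "t \<ge> 0")
  case True
  then have e: "\<bar>int m * t + 1\<bar> = int (m * nat t + 1)" by simp
  have "vv m t = m * nat t + 1" unfolding vv_def e by (rule nat_int)
  then show ?thesis using True by simp
next
  case False
  then have "int m * t + 1 = - int (m * nat (-t-1) + (m - 1))" using assms
    by (simp add: of_nat_diff algebra_simps)
  then have e: "\<bar>int m * t + 1\<bar> = int (m * nat (-t-1) + (m - 1))"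
    by (simp only: abs_minus_cancel abs_of_nat)
  have "vv m t = m * nat (-t-1) + (m - 1)" unfolding vv_def e by (rule nat_int)
  then show ?thesis using False by simp
qed

lemma vv_mod:
  assumes "m \<ge> 3"
  shows "vv m t mod m = (if t \<ge> 0 then 1 else m - 1)"
proof -
  have a: "(m * q + r) mod m = r" if "r < m" for q r using that by simp
  show ?thesis
  proof (cases "t \<ge> 0")
    case True
    have "vv m t = m * nat t + 1" using vv_val[OF assms] True by simp
    then have "vv m t mod m = (m * nat t + 1) mod m" by (simp only:)
    also have "\<dots> = 1" by (rule a) (use assms in simp)
    finally show ?thesis using True by simp
  next
    case False
    have "vv m t = m * nat (-t-1) + (m - 1)" using vv_val[OF assms] False by simp
    then have "vv m t mod m = (m * nat (-t-1) + (m - 1)) mod m" by (simp only:)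
    also have "\<dots> = m - 1" by (rule a) (use assms in simp)
    finally show ?thesis using False by simp
  qed
qed

lemma vv_int: "int (vv m t) = \<bar>int m * t + 1\<bar>"
  by (simp add: vv_def)

lemma vv_inj:
  assumes "m \<ge> 3" "vv m s = vv m t"
  shows "s = t"
proof -
  have ms: "vv m s mod m = vv m t mod m" using assms by simp
  show ?thesis
  proof (cases "s \<ge> 0")
    case True
    then have "t \<ge> 0" using ms vv_mod[OF assms(1)] assms(1) by (auto split: if_splits)
    then show ?thesis using True assms vv_val[OF assms(1)] by auto
  next
    case False
    then have "\<not> t \<ge> 0" using ms vv_mod[OF assms(1)] assms(1) by (auto split: if_splits)
    have "vv m s = m * nat (-s-1) + (m - 1)" using False vv_val[OF assms(1), of s] by simp
    moreover have "vv m t = m * nat (-t-1) + (m - 1)" using \<open>\<not> t \<ge> 0\<close> vv_val[OF assms(1), of t] by simp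
    ultimately have "m * nat (-s-1) = m * nat (-t-1)" using assms(2) by linarith
    then have "nat (-s-1) = nat (-t-1)" using assms(1) by simp
    then show ?thesis using False \<open>\<not> t \<ge> 0\<close> by simp
  qed
qed

lemma vv_nz: "m \<ge> 3 \<Longrightarrow> vv m t mod m \<noteq> 0"
  by (simp add: vv_mod)

lemma abs_le_vv:
  assumes "m \<ge> 3"
  shows "\<bar>t\<bar> \<le> \<bar>int m * t + 1\<bar>"
proof (cases "t \<ge> 0")
  case True
  then have "t \<le> int m * t" using assms by (simp add: mult_le_cancel_right1 )
  then show ?thesis using True by simp
next
  case False
  then have "int m * t \<le> 3 * t" using assms by (intro mult_right_mono_neg) auto
  then show ?thesis using False abs_ge_minus_self[of "int m * t + 1"] by linarith
qed

definition phi :: "nat \<Rightarrow> nat set \<times> int set \<Rightarrow> nat set" where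
  "phi m x = (\<lambda>a. m * a) ` fst x \<union> vv m ` snd x"

lemma Wt_nonneg: "Wt m D \<ge> 0"
  unfolding Wt_def by (rule sum_nonneg) simp

lemma finite_Xset:
  assumes "m \<ge> 3"
  shows "finite (Xset m n)"
proof -
  have "Xset m n \<subseteq> Pow {0..n} \<times> Pow {- int n..int n}"
  proof
    fix x assume "x \<in> Xset m n"
    then obtain A D where x: "x = (A, D)" and fA: "finite A" and fD: "finite D"
      and w: "int m * int (\<Sum>A) + Wt m D = int n" by (auto simp: Xset_def)
    have w0: "Wt m D \<ge> 0" by (rule Wt_nonneg)
    have mA: "int m * int (\<Sum>A) \<ge> 0" by (rule mult_nonneg_nonneg) (rule of_nat_0_le_iff)+
    have "A \<subseteq> {0..n}"
    proof
      fix a assume "a \<in> A"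
      then have "a \<le> \<Sum>A" using fA by (intro member_le_sum) auto
      also have "\<dots> \<le> m * \<Sum>A" using assms by simp
      finally have "int a \<le> int m * int (\<Sum>A)" by (metis of_nat_le_iff of_nat_mult)
      then show "a \<in> {0..n}" using w w0 by simp
    qed
    moreover have "D \<subseteq> {- int n..int n}"
    proof
      fix t assume "t \<in> D"
      then have "\<bar>int m * t + 1\<bar> \<le> Wt m D" unfolding Wt_def using fD
        by (intro member_le_sum) auto
      then have "\<bar>t\<bar> \<le> int n" using abs_le_vv[OF assms, of t] w mA by linarith
      then show "t \<in> {- int n..int n}" by (simp add: abs_le_iff)
    qed
    ultimately show "x \<in> Pow {0..n} \<times> Pow {- int n..int n}" using x by simp
  qed
  then show ?thesis by (rule finite_subset) simp
qed

lemma phi_parts: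
  assumes "m \<ge> 3"
  shows "{x \<in> phi m (A, D). x mod m = 0} = (\<lambda>a. m * a) ` A"
    and "{x \<in> phi m (A, D). x mod m \<noteq> 0} = vv m ` D"
proof -
  have nz: "\<And>t. vv m t mod m \<noteq> 0" using vv_nz[OF assms] by blast
  have z: "\<And>a. (m * a) mod m = 0" by simp
  show "{x \<in> phi m (A, D). x mod m = 0} = (\<lambda>a. m * a) ` A"
  proof (intro equalityI subsetI)
    fix x assume x: "x \<in> {x \<in> phi m (A, D). x mod m = 0}"
    then have x0: "x mod m = 0" by simp
    have "x \<notin> vv m ` D"
    proof
      assume "x \<in> vv m ` D"
      then obtain t where "x = vv m t" by blast
      then show False using nz[of t] x0 by simp
    qed
    then show "x \<in> (\<lambda>a. m * a) ` A" using x unfolding phi_def by auto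
  next
    fix x assume "x \<in> (\<lambda>a. m * a) ` A"
    then show "x \<in> {x \<in> phi m (A, D). x mod m = 0}" unfolding phi_def by auto
  qed
  show "{x \<in> phi m (A, D). x mod m \<noteq> 0} = vv m ` D"
  proof (intro equalityI subsetI)
    fix x assume x: "x \<in> {x \<in> phi m (A, D). x mod m \<noteq> 0}"
    then have x0: "x mod m \<noteq> 0" by simp
    have "x \<notin> (\<lambda>a. m * a) ` A"
    proof
      assume "x \<in> (\<lambda>a. m * a) ` A"
      then obtain a where "x = m * a" by blast
      then show False using x0 by simp
    qed
    then show "x \<in> vv m ` D" using x unfolding phi_def by auto
  next
    fix x assume "x \<in> vv m ` D"
    then obtain t where "x = vv m t" "t \<in> D" by blast
    then show "x \<in> {x \<in> phi m (A, D). x mod m \<noteq> 0}" unfolding phi_def using nz[of t] by auto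
  qed
qed

lemma inj_mult: "m \<ge> 3 \<Longrightarrow> inj (\<lambda>a::nat. m * a)"
  by (auto simp: inj_def)

lemma inj_vv: "m \<ge> 3 \<Longrightarrow> inj (vv m)"
  using vv_inj by (auto simp: inj_def)

lemma phi_inj:
  assumes "m \<ge> 3"
  shows "inj_on (phi m) X"
proof (rule inj_onI)
  fix x y assume "x \<in> X" "y \<in> X" and e: "phi m x = phi m y"
  obtain A D where x: "x = (A, D)" by (cases x)
  obtain A' D' where y: "y = (A', D')" by (cases y)
  have "(\<lambda>a. m * a) ` A = (\<lambda>a. m * a) ` A'"
    using phi_parts(1)[OF assms, of A D] phi_parts(1)[OF assms, of A' D'] e x y by simp
  then have "A = A'" using inj_mult[OF assms] by (simp add: inj_image_eq_iff)
  moreover have "vv m ` D = vv m ` D'"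
    using phi_parts(2)[OF assms, of A D] phi_parts(2)[OF assms, of A' D'] e x y by simp
  then have "D = D'" using inj_vv[OF assms] by (simp add: inj_image_eq_iff)
  ultimately show "x = y" using x y by simp
qed

lemma phi_disj: "m \<ge> 3 \<Longrightarrow> (\<lambda>a. m * a) ` A \<inter> vv m ` D = {}"
proof -
  assume m: "m \<ge> 3"
  have nz: "\<And>t. vv m t mod m \<noteq> 0" using vv_nz[OF m] by blast
  have z: "\<And>a. (m * a) mod m = 0" by simp
  show ?thesis using nz z by (auto simp del: mult_mod_right) (metis z nz)
qed

lemma phi_sum:
  assumes "m \<ge> 3" "finite A" "finite D"
  shows "int (\<Sum>(phi m (A, D))) = int m * int (\<Sum>A) + Wt m D"
proof -
  have "\<Sum>(phi m (A, D)) = \<Sum>((\<lambda>a. m * a) ` A) + \<Sum>(vv m ` D)"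
    unfolding phi_def using assms phi_disj[OF assms(1)] by (simp add: sum.union_disjoint)
  also have "\<Sum>((\<lambda>a. m * a) ` A) = (\<Sum>a\<in>A. m * a)"
    using inj_mult[OF assms(1)] by (simp add: sum.reindex inj_on_subset)
  also have "\<Sum>(vv m ` D) = (\<Sum>t\<in>D. vv m t)"
    using inj_vv[OF assms(1)] by (simp add: sum.reindex inj_on_subset)
  finally have "int (\<Sum>(phi m (A, D))) = int (\<Sum>a\<in>A. m * a) + (\<Sum>t\<in>D. int (vv m t))"
    by simp
  also have "\<dots> = int m * int (\<Sum>A) + Wt m D"
    by (simp add: vv_int Wt_def sum_distrib_left)
  finally show ?thesis .
qed

lemma phi_card:
  assumes "m \<ge> 3" "finite A" "finite D"
  shows "card (phi m (A, D)) = card A + card D"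
proof -
  have "card (phi m (A, D)) = card ((\<lambda>a. m * a) ` A) + card (vv m ` D)"
    unfolding phi_def using assms phi_disj[OF assms(1)] by (simp add: card_Un_disjoint)
  also have "\<dots> = card A + card D"
    using inj_mult[OF assms(1)] inj_vv[OF assms(1)] by (simp add: card_image inj_on_subset)
  finally show ?thesis .
qed


lemma phi_image:
  assumes m: "m \<ge> 3"
  shows "phi m ` Xset m n = dist_parts_mod m n"
proof (intro equalityI subsetI)
  fix S assume "S \<in> phi m ` Xset m n"
  then obtain A D where S: "S = phi m (A, D)" and X: "(A, D) \<in> Xset m n" by auto
  have fA: "finite A" and A0: "0 \<notin> A" and fD: "finite D"
    and w: "int m * int (\<Sum>A) + Wt m D = int n" using X by (auto simp: Xset_def)
  have fS: "finite S" using S fA fD by (simp add: phi_def)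
  have S0: "0 \<notin> S"
  proof
    assume "0 \<in> S"
    then have "0 \<in> (\<lambda>a. m * a) ` A \<or> 0 \<in> vv m ` D" using S by (simp add: phi_def)
    then show False
    proof
      assume "0 \<in> (\<lambda>a. m * a) ` A"
      then obtain a where "a \<in> A" "m * a = 0" by auto
      then show False using A0 m by simp
    next
      assume "0 \<in> vv m ` D"
      then obtain t where "vv m t = 0" by auto
      then show False using vv_nz[OF m, of t] by simp
    qed
  qed
  have "int (\<Sum>S) = int n" using phi_sum[OF m fA fD] w S by simp
  then have sS: "\<Sum>S = n" by (simp only: of_nat_eq_iff)
  have md: "\<forall>x\<in>S. x mod m = 0 \<or> x mod m = 1 \<or> x mod m = m - 1"
  proof
    fix x assume "x \<in> S"
    then have "x \<in> (\<lambda>a. m * a) ` A \<or> x \<in> vv m ` D" using S by (simp add: phi_def)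
    then show "x mod m = 0 \<or> x mod m = 1 \<or> x mod m = m - 1"
    proof
      assume "x \<in> (\<lambda>a. m * a) ` A" then show ?thesis by auto
    next
      assume "x \<in> vv m ` D"
      then obtain t where "x = vv m t" by auto
      then show ?thesis using vv_mod[OF m, of t] by auto
    qed
  qed
  show "S \<in> dist_parts_mod m n" unfolding dist_parts_mod_def using fS S0 sS md by simp
next
  fix S assume "S \<in> dist_parts_mod m n"
  then have fS: "finite S" and S0: "0 \<notin> S" and sS: "\<Sum>S = n"
    and md: "\<forall>x\<in>S. x mod m = 0 \<or> x mod m = 1 \<or> x mod m = m - 1"
    by (auto simp: dist_parts_mod_def)
  define S0' where "S0' = {x\<in>S. x mod m = 0}"
  define S1 where "S1 = {x\<in>S. x mod m = 1}"
  define S2 where "S2 = {x\<in>S. x mod m = m - 1}"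
  define A where "A = (\<lambda>x. x div m) ` S0'"
  define D where "D = (\<lambda>x. int (x div m)) ` S1 \<union> (\<lambda>x. - int (x div m) - 1) ` S2"
  have dm: "\<And>x. m * (x div m) + x mod m = x" by simp
  have eA: "(\<lambda>a. m * a) ` A = S0'"
  proof -
    have "(\<lambda>a. m * a) ` A = (\<lambda>x. m * (x div m)) ` S0'" unfolding A_def by (simp add: image_image)
    also have "\<dots> = (\<lambda>x. x) ` S0'"
      by (rule image_cong) (auto simp: S0'_def dm[symmetric] intro: sym)
    finally show ?thesis by simp
  qed
  have v1: "vv m (int (x div m)) = x" if "x \<in> S1" for x
  proof -
    have "vv m (int (x div m)) = m * (x div m) + 1" using vv_val[OF m] by simp
    also have "\<dots> = x" using that dm[of x] by (simp add: S1_def)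
    finally show ?thesis .
  qed
  have v2: "vv m (- int (x div m) - 1) = x" if "x \<in> S2" for x
  proof -
    have "vv m (- int (x div m) - 1) = m * nat (int (x div m)) + (m - 1)" using vv_val[OF m] by simp
    also have "\<dots> = x" using that dm[of x] by (simp add: S2_def)
    finally show ?thesis .
  qed
  have eD: "vv m ` D = S1 \<union> S2"
  proof -
    have "vv m ` D = (\<lambda>x. vv m (int (x div m))) ` S1 \<union> (\<lambda>x. vv m (- int (x div m) - 1)) ` S2"
      unfolding D_def by (simp add: image_Un image_image)
    also have "(\<lambda>x. vv m (int (x div m))) ` S1 = S1" using v1 by (simp add: image_cong[OF refl v1])
    also have "(\<lambda>x. vv m (- int (x div m) - 1)) ` S2 = S2" using v2 by (simp add: image_cong[OF refl v2])
    finally show ?thesis .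
  qed
  have eS: "phi m (A, D) = S"
    unfolding phi_def fst_conv snd_conv eA eD using md by (auto simp: S0'_def S1_def S2_def)
  have fA: "finite A" "finite D" using fS by (auto simp: A_def D_def S0'_def S1_def S2_def)
  have A0: "0 \<notin> A"
  proof
    assume "0 \<in> A"
    then obtain x where "x \<in> S" "x mod m = 0" "x div m = 0" by (auto simp: A_def S0'_def)
    then have "x = 0" using dm[of x] by simp
    then show False using S0 \<open>x \<in> S\<close> by simp
  qed
  have "int m * int (\<Sum>A) + Wt m D = int n" using phi_sum[OF m fA] eS sS by simp
  then have "(A, D) \<in> Xset m n" using fA A0 by (simp add: Xset_def)
  then show "S \<in> phi m ` Xset m n" using eS by (metis image_eqI)
qed


lemma pe_po_sum:
  assumes "finite P"
  shows "int (card {S\<in>P. even (card S)}) - int (card {S\<in>P. odd (card S)})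
         = (\<Sum>S\<in>P. (-1::int) ^ card S)"
proof -
  have "(\<Sum>S\<in>P. (-1::int) ^ card S) = (\<Sum>S\<in>P. if even (card S) then 1 else -1)"
    by (rule sum.cong) auto
  also have "\<dots> = (\<Sum>S\<in>P \<inter> {S. even (card S)}. 1) + (\<Sum>S\<in>P \<inter> - {S. even (card S)}. -1)"
    using assms by (rule sum.If_cases)
  also have "P \<inter> {S. even (card S)} = {S\<in>P. even (card S)}" by auto
  also have "P \<inter> - {S. even (card S)} = {S\<in>P. odd (card S)}" by auto
  finally show ?thesis by simp
qed

lemma main_sum:
  assumes m: "m \<ge> 3"
  shows "int (p_e m n) - int (p_o m n) = (\<Sum>x\<in>{x\<in>Xset m n. iota x = x}. sg x)"
proof -
  have m1: "m \<ge> 1" using m by simp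
  have fX: "finite (Xset m n)" by (rule finite_Xset[OF m])
  have "finite (phi m ` Xset m n)" using fX by (rule finite_imageI)
  then have fP: "finite (dist_parts_mod m n)" by (simp only: phi_image[OF m])
  have "int (p_e m n) - int (p_o m n) = (\<Sum>S\<in>dist_parts_mod m n. (-1::int) ^ card S)"
    unfolding p_e_def p_o_def by (rule pe_po_sum[OF fP])
  also have "\<dots> = (\<Sum>S\<in>phi m ` Xset m n. (-1::int) ^ card S)" by (simp add: phi_image[OF m])
  also have "\<dots> = (\<Sum>x\<in>Xset m n. (-1::int) ^ card (phi m x))"
    using phi_inj[OF m] by (simp add: sum.reindex)
  also have "\<dots> = (\<Sum>x\<in>Xset m n. sg x)"
  proof (rule sum.cong)
    fix x assume "x \<in> Xset m n"
    then obtain A D where x: "x = (A, D)" and "finite A" "finite D" by (auto simp: Xset_def)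
    then show "(-1::int) ^ card (phi m x) = sg x" using phi_card[OF m] by (simp add: sg_def)
  qed simp
  also have "\<dots> = (\<Sum>x\<in>{x\<in>Xset m n. iota x = x}. sg x)"
  proof (rule sum_invol_cancel[OF fX])
    fix x assume x: "x \<in> Xset m n"
    obtain A D where xe: "x = (A, D)" by (cases x)
    show "iota x \<in> Xset m n" using iota_props(1)[OF _ m1] x xe by simp
    show "iota (iota x) = x" using iota_iota x xe by (simp add: Xset_def)
    show "iota x \<noteq> x \<Longrightarrow> sg (iota x) = - sg x" using iota_props(2)[OF _ m1] x xe by simp
  qed
  finally show ?thesis .
qed

lemma fix_char:
  assumes m: "m \<ge> 3"
  shows "{x\<in>Xset m n. iota x = x} = {({}::nat set, G j) | j. Wt m (G j) = int n}"
proof (intro equalityI subsetI)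
  fix x assume "x \<in> {x\<in>Xset m n. iota x = x}"
  then obtain A D where x: "x = (A, D)" and X: "(A, D) \<in> Xset m n" and fx: "iota (A, D) = (A, D)"
    by (cases x) auto
  have h: "A = {} \<and> D = G (chg D)" using iota_props(3)[OF X _ fx] m by simp
  then have A0: "A = {}" by simp
  have gD: "G (chg D) = D" using h by simp
  have "Wt m D = int n" using X A0 by (simp add: Xset_def)
  then have "Wt m (G (chg D)) = int n" by (simp only: gD)
  then show "x \<in> {({}::nat set, G j) | j. Wt m (G j) = int n}" unfolding x A0 using gD by blast
next
  fix x assume "x \<in> {({}::nat set, G j) | j. Wt m (G j) = int n}"
  then obtain j where x: "x = ({}::nat set, G j)" and w: "Wt m (G j) = int n" by auto
  then show "x \<in> {x\<in>Xset m n. iota x = x}" by (simp add: Xset_def G_fixed)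
qed

lemma fix_single:
  assumes m: "m \<ge> 3" and w: "Wt m (G j0) = int n"
  shows "{x\<in>Xset m n. iota x = x} = {({}::nat set, G j0)}"
  unfolding fix_char[OF m]
proof (intro equalityI subsetI)
  fix x assume "x \<in> {({}::nat set, G j) | j. Wt m (G j) = int n}"
  then obtain j where x: "x = ({}::nat set, G j)" and wj: "Wt m (G j) = int n" by blast
  have "j = j0" using Wt_G_inj[OF m, of j j0] wj w by simp
  then show "x \<in> {({}::nat set, G j0)}" using x by simp
next
  fix x assume "x \<in> {({}::nat set, G j0)}"
  then show "x \<in> {({}::nat set, G j) | j. Wt m (G j) = int n}" using w by blast
qed


theorem theorem2p7:
  fixes m n :: nat
  assumes "m \<ge> 3"
  shows "(\<forall>k::nat. (int n = P_gen m k \<or> int n = Q_gen m k) \<longrightarrow>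
            int (p_e m n) - int (p_o m n) = (-1) ^ k)
       \<and> ((\<nexists>k::nat. int n = P_gen m k \<or> int n = Q_gen m k) \<longrightarrow>
            int (p_e m n) - int (p_o m n) = 0)"
proof -
  have m: "m \<ge> 3" by (rule assms)
  have m1: "m \<ge> 1" using m by simp
  have main: "int (p_e m n) - int (p_o m n) = (\<Sum>x\<in>{x\<in>Xset m n. iota x = x}. sg x)"
    by (rule main_sum[OF m])
  have single: "int (p_e m n) - int (p_o m n) = (-1) ^ k"
    if w: "Wt m (G j) = int n" and c: "card (G j) = k" for j k
  proof -
    have "int (p_e m n) - int (p_o m n) = sg ({}::nat set, G j)"
      unfolding main fix_single[OF m w] by simp
    also have "\<dots> = (-1) ^ k" using c by (simp add: sg_def)
    finally show ?thesis .
  qed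
  have part1: "int (p_e m n) - int (p_o m n) = (-1) ^ k"
    if h: "int n = P_gen m k \<or> int n = Q_gen m k" for k
    using h
  proof
    assume "int n = P_gen m k"
    then have "Wt m (G (int k)) = int n" using P_gen_eq[OF m1, of k] by simp
    moreover have "card (G (int k)) = k" by (simp add: card_G)
    ultimately show ?thesis by (rule single)
  next
    assume "int n = Q_gen m k"
    then have "Wt m (G (- int k)) = int n" using Q_gen_eq[OF m1, of k] by simp
    moreover have "card (G (- int k)) = k" by (simp add: card_G)
    ultimately show ?thesis by (rule single)
  qed
  have part2: "int (p_e m n) - int (p_o m n) = 0"
    if h: "\<nexists>k::nat. int n = P_gen m k \<or> int n = Q_gen m k"
  proof -
    have "{x\<in>Xset m n. iota x = x} = {}"
    proof (rule ccontr)
      assume "{x\<in>Xset m n. iota x = x} \<noteq> {}"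
      then obtain j where wj: "Wt m (G j) = int n" unfolding fix_char[OF m] by blast
      show False
      proof (cases "j \<ge> 0")
        case True
        then have "j = int (nat j)" by simp
        then have "P_gen m (nat j) = int n" using P_gen_eq[OF m1, of "nat j"] wj by simp
        then show False using h by metis
      next
        case False
        then have "j = - int (nat (-j))" by simp
        then have "Q_gen m (nat (-j)) = int n" using Q_gen_eq[OF m1, of "nat (-j)"] wj by simp
        then show False using h by metis
      qed
    qed
    then show ?thesis unfolding main by (simp only: sum.empty)
  qed
  show ?thesis using part1 part2 by blast
qed

end
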